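(* Let $k$ be a field of characteristic $p>0$ and $A$ a $k$-vector space of dimension $1$. For every $r\ge0$, $S_{\le r}A\neq\bigoplus_{0\le i\le r}S^iA$.
   Context: $SA=\bigoplus_{n\ge0}S^nA$ is the symmetric algebra of $A$ ($S^0A=k$, $S^nA$ the $n$-th symmetric power, with pure symmetric tensors $a_1\otimes_s\dots\otimes_s a_n$). The linear map $\partial\colon SA\to SA\otimes A$ is given by $\partial(\lambda)=0$ for $\lambda\in S^0A$ and $\partial(a_1\otimes_s\dots\otimes_s a_n)=\sum_{i=1}^n(a_1\otimes_s\dots\otimes_s a_{i-1}\otimes_s a_{i+1}\otimes_s\dots\otimes_s a_n)\otimes a_i$. Iterates: $\partial^0=1_{SA}$ and $\partial^{r+1}:=\partial;(\partial^r\otimes 1_A)\colon SA\to SA\otimes A^{\otimes(r+1)}$. Define $S_{\le r}A:=\ker(\partial^{r+1})\subseteq SA$. *)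

theory Defs
  imports Main "HOL-Library.Multiset" "HOL-Library.Poly_Mapping"
begin

(*
  Model: the k-vector space A is given with a basis indexed by the type 'b
  (so A = k^('b), dim A = CARD('b)).  Then S^n A has basis the monomials
  a_M for multisets M of basis indices of size n, and SA is the space of
  finitely supported coefficient functions on multisets, i.e. 'b multiset =>0 'k.
  The tensor product SA \<otimes> A^{\<otimes> m} has basis a_M \<otimes> a_{i_1} \<otimes> ... \<otimes> a_{i_m},
  indexed by pairs (M, [i_1,...,i_m]); we represent its elements by
  coefficient functions on such pairs (only lists of length m are used).
*)

type_synonym ('b,'k) symalg = "'b multiset \<Rightarrow>\<^sub>0 'k"
type_synonym ('b,'k) symtens = "'b multiset \<times> 'b list \<Rightarrow> 'k"

(*Inclusion SA = SA \<otimes> A^{\<otimes>0}.*)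
definition sym_embed :: "('b,'k::zero) symalg \<Rightarrow> ('b,'k) symtens" where
  "sym_embed f = (\<lambda>(M, l). if l = [] then Poly_Mapping.lookup f M else 0)"

(*The map \<partial> \<otimes> 1_{A^{\<otimes> m}} : SA \<otimes> A^{\<otimes> m} \<rightarrow> SA \<otimes> A \<otimes> A^{\<otimes> m}, written on coefficients.
  On basis vectors, \<partial>(a_M) = \<Sum>_{i} count M i \<cdot> a_{M - {#i#}} \<otimes> a_i
  (the definition on pure symmetric tensors of basis vectors), so the coefficient of
  a_N \<otimes> a_i \<otimes> a_l in the image of T is (count N i + 1) times the coefficient of
  a_{N + {#i#}} \<otimes> a_l in T.*)
definition sym_dpart :: "('b,'k::semiring_1) symtens \<Rightarrow> ('b,'k) symtens" where
  "sym_dpart T = (\<lambda>(N, l). case l of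
       [] \<Rightarrow> 0
     | i # l' \<Rightarrow> of_nat (count N i + 1) * T (N + {#i#}, l'))"

(*\<partial>^r : SA \<rightarrow> SA \<otimes> A^{\<otimes> r};  \<partial>^0 = 1, \<partial>^{r+1} = \<partial> ; (\<partial>^r \<otimes> 1_A).*)
definition sym_partial_iter :: "nat \<Rightarrow> ('b,'k::semiring_1) symalg \<Rightarrow> ('b,'k) symtens" where
  "sym_partial_iter r f = (sym_dpart ^^ r) (sym_embed f)"

definition S_le :: "nat \<Rightarrow> ('b,'k::semiring_1) symalg set" where
  "S_le r = {f. sym_partial_iter (Suc r) f = (\<lambda>_. 0)}"

definition sym_graded_le :: "nat \<Rightarrow> ('b,'k::zero) symalg set" where
  "sym_graded_le r = {f. \<forall>M. Poly_Mapping.lookup f M \<noteq> 0 \<longrightarrow> size M \<le> r}"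

end

theory Submission
  imports Defs
begin

lemma dpart_zero: "sym_dpart (\<lambda>_. (0::'k::semiring_1)) = (\<lambda>_. 0)"
  by (rule ext) (auto simp: sym_dpart_def split: list.splits)

lemma funpow_dpart_zero: "(sym_dpart ^^ k) (\<lambda>_. (0::'k::semiring_1)) = (\<lambda>_. 0)"
  by (induction k) (auto simp: dpart_zero)

theorem proposition7p4:
  assumes "CHAR('k::field) > 0"
    and "card (UNIV :: 'b set) = 1"
  shows "S_le r \<noteq> (sym_graded_le r :: ('b,'k) symalg set)"
proof -
  obtain b :: 'b where U: "UNIV = {b}" using assms(2) by (metis card_1_singletonE)
  have allb: "x = b" for x :: 'b using U by blast
  define n where "n = CHAR('k) * Suc r"
  have n0: "of_nat n = (0::'k)" unfolding n_def by simp
  have nr: "n > r"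
  proof -
    have "1 * Suc r \<le> CHAR('k) * Suc r" using assms(1) by (intro mult_le_mono1) simp
    then show ?thesis unfolding n_def by simp
  qed
  define f :: "('b,'k) symalg" where "f = Poly_Mapping.single (replicate_mset n b) 1"
  have cnt: "count M b = size M" for M :: "'b multiset"
  proof (induction M)
    case empty then show ?case by simp
  next
    case (add x M)
    have "x = b" by (rule allb)
    then show ?case using add by simp
  qed
  have d0: "sym_dpart (sym_embed f) = (\<lambda>_. 0)"
  proof (rule ext, clarify)
    fix N :: "'b multiset" and l :: "'b list"
    show "sym_dpart (sym_embed f) (N, l) = 0"
    proof (cases l)
      case Nil then show ?thesis by (simp add: sym_dpart_def)
    next
      case (Cons i l')
      have "i = b" by (rule allb)
      show ?thesis
      proof (cases "l' = [] \<and> N + {#b#} = replicate_mset n b")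
        case True
        have "count (N + {#b#}) b = n" using True by simp
        then have c: "of_nat (count N b + 1) = (0::'k)" using n0 by simp
        have "sym_dpart (sym_embed f) (N, l) = of_nat (count N b + 1) * sym_embed f (N + {#b#}, l')"
          using Cons \<open>i = b\<close> by (simp add: sym_dpart_def)
        then show ?thesis using c by simp
      next
        case False
        then show ?thesis using Cons \<open>i = b\<close>
          by (auto simp: sym_dpart_def sym_embed_def f_def lookup_single)
      qed
    qed
  qed
  have "f \<in> S_le r"
    unfolding S_le_def sym_partial_iter_def
    by (simp add: funpow_Suc_right d0 funpow_dpart_zero del: funpow.simps)
  moreover have "f \<notin> sym_graded_le r"
    unfolding sym_graded_le_def f_def using nr
    by (auto intro!: exI[of _ "replicate_mset n b"] simp: lookup_single)
  ultimately show ?thesis by blast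
qed

end
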